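(* Let $k,m,n,l$ be positive integers with $nl+ml\le k$ and let $q$ be a prime power. Let $\mathbb{L}$ be the set of $l$-dimensional subspaces of $\mathbb{F}_q^k$ and define $\mathbb{X}=\{\{L_1,\dots,L_n\}\subseteq\mathbb{L}: \dim(L_1+\cdots+L_n)=nl\}$, $\mathbb{Y}=\{\{L_1,\dots,L_m\}\subseteq\mathbb{L}: \dim(L_1+\cdots+L_m)=ml\}$, $\mathbb{Z}=\{\{L_1,\dots,L_{n+m}\}\subseteq\mathbb{L}: \dim(L_1+\cdots+L_{n+m})=(n+m)l\}$. Let $B$ be the bipartite graph with left (user) vertex set $\mathbb{X}$, right (subfile) vertex set $\mathbb{Y}$, and $X$ adjacent to $Y$ iff $X\cup Y\in\mathbb{Z}$. Put $P=\prod_{i=0}^{l-1}\binom{l-i}{1}_q$. Then $B$ is a $(K,F,D)$ bipartite caching graph with $$K=\frac{(l!)^n q^{\frac{n(n-1)l^2}{2}}}{(nl)!\,n!}\cdot\frac{\prod_{i=0}^{nl-1}\binom{k-i}{1}_q}{P^n}\prod_{i=0}^{n-1}\binom{(n-i)l}{l},\qquad F=\frac{(l!)^m q^{\frac{m(m-1)l^2}{2}}}{(ml)!\,m!}\cdot\frac{\prod_{i=0}^{ml-1}\binom{k-i}{1}_q}{P^m}\prod_{i=0}^{m-1}\binom{(m-i)l}{l},$$ admitting an induced matching cover with $$S=\frac{(l!)^{n+m}q^{\frac{(n+m)(n+m-1)l^2}{2}}}{((n+m)l)!\,(n+m)!}\cdot\frac{\prod_{i=0}^{(n+m)l-1}\binom{k-i}{1}_q}{P^{n+m}}\prod_{i=0}^{n+m-1}\binom{(n+m-i)l}{l}$$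 induced matchings, each having $g=\binom{n+m}{n}$ edges; it defines a coded caching scheme (for $N\ge K$ files) with $K$ users, subpacketization $F$, $$\frac{M}{N}=1-q^{mnl^2}\prod_{i=0}^{ml-1}\frac{\binom{k-nl-i}{1}_q}{\binom{k-i}{1}_q},$$ rate $R=S/F$ and global caching gain $\gamma=g$.
   Context: $\binom{a}{1}_q=\frac{q^a-1}{q-1}$; other binomial coefficients $\binom{a}{b}$ are ordinary. Coded caching setup: a server holds $N$ files and is connected by an error-free broadcast link to $K$ users, each with a cache able to store $M$ files; assumed $N\ge K$. Each file is split into $F$ equal-size subfiles indexed by $\mathcal{F}$. Caching is symmetric: each user caches, for each index $f$, the $f$-th subfile of either all files or none. In the delivery phase each user demands one file and the server broadcasts subfile-size transmissions allowing every user to recover its demand, for every demand vector. Rate $R=(\text{number of transmissions})/F$; global caching gain $\gamma=K(1-M/N)/R$. A $(K,F,D)$ bipartite caching graph is a bipartite graph with $K$ left (user) vertices and $F$ right (subfile) vertices, every left vertex of degree $D$; it defines the symmetric caching scheme in which user $k$ does not cache subfile index $f$ exactly when $\{k,f\}$ is an edge (so $M/N=1-D/F$). An induced matching of $B$ is a set $\mathcal{C}\subseteq E(B)$ such that for any two distinct $\{k_1,f_1\},\{k_2,f_2\}\in\mathcal{C}$: $k_1\ne k_2$, $f_1\ne f_2$, $\{k_1,f_2\},\{k_2,f_1\}\notin E(B)$. An induced matching cover is a set of induced matchings partitioning $E(B)$. *)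

theory Defs
  imports "HOL-Analysis.Analysis" "HOL-Library.Disjoint_Sets"
begin

definition qint :: "nat \<Rightarrow> nat \<Rightarrow> real" where
  "qint q a = (real q ^ a - 1) / (real q - 1)"

definition bip_edges :: "'u set \<Rightarrow> 'w set \<Rightarrow> ('u \<Rightarrow> 'w \<Rightarrow> bool) \<Rightarrow> ('u \<times> 'w) set" where
  "bip_edges U W E = {(x, y). x \<in> U \<and> y \<in> W \<and> E x y}"

definition bipartite_caching_graph ::
  "'u set \<Rightarrow> 'w set \<Rightarrow> ('u \<Rightarrow> 'w \<Rightarrow> bool) \<Rightarrow> nat \<Rightarrow> nat \<Rightarrow> nat \<Rightarrow> bool" where
  "bipartite_caching_graph U W E K F D \<longleftrightarrow>
     finite U \<and> finite W \<and> card U = K \<and> card W = F \<and>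
     (\<forall>x\<in>U. card {y\<in>W. E x y} = D)"

definition induced_matching ::
  "'u set \<Rightarrow> 'w set \<Rightarrow> ('u \<Rightarrow> 'w \<Rightarrow> bool) \<Rightarrow> ('u \<times> 'w) set \<Rightarrow> bool" where
  "induced_matching U W E C \<longleftrightarrow> C \<subseteq> bip_edges U W E \<and>
     (\<forall>(x1, y1)\<in>C. \<forall>(x2, y2)\<in>C. (x1, y1) \<noteq> (x2, y2) \<longrightarrow>
        x1 \<noteq> x2 \<and> y1 \<noteq> y2 \<and> \<not> E x1 y2 \<and> \<not> E x2 y1)"

definition induced_matching_cover ::
  "'u set \<Rightarrow> 'w set \<Rightarrow> ('u \<Rightarrow> 'w \<Rightarrow> bool) \<Rightarrow> ('u \<times> 'w) set set \<Rightarrow> bool" where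
  "induced_matching_cover U W E \<C> \<longleftrightarrow>
     (\<forall>C\<in>\<C>. induced_matching U W E C) \<and> partition_on (bip_edges U W E) \<C>"

text \<open>l-dimensional subspaces of F_q^k (k = CARD('n)).\<close>
definition subspaces_dim :: "nat \<Rightarrow> ('a::field ^ 'n) set set" where
  "subspaces_dim l = {L. vec.subspace L \<and> vec.dim L = l}"

text \<open>Sets of t distinct l-dim subspaces whose sum has dimension t*l.
  The sum L_1 + ... + L_t is the span of their union.\<close>
definition indep_family :: "nat \<Rightarrow> nat \<Rightarrow> ('a::field ^ 'n) set set set" where
  "indep_family l t = {X. X \<subseteq> subspaces_dim l \<and> card X = t \<and>
                          vec.dim (vec.span (\<Union>X)) = t * l}"

definition cnt :: "nat \<Rightarrow> nat \<Rightarrow> nat \<Rightarrow> nat \<Rightarrow> real" where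
  "cnt q k l t =
     (fact l) ^ t * real q ^ (t * (t - 1) * l\<^sup>2 div 2) / (fact (t * l) * fact t)
     * ((\<Prod>i<t * l. qint q (k - i)) / (\<Prod>i<l. qint q (l - i)) ^ t)
     * (\<Prod>i<t. real ((t - i) * l choose l))"

end

theory Submission
  imports Defs "HOL-Combinatorics.Multiset_Permutations"
begin


lemma card_field_ge2: "2 \<le> CARD('a::{finite,field})"
proof -
  have "{0::'a, 1} \<subseteq> UNIV" by simp
  hence "card {0::'a, 1} \<le> CARD('a)" using card_mono[of "UNIV::'a set" "{0,1}"] by simp
  thus ?thesis by simp
qed

lemma card_span_indep:
  fixes B :: "('a::{finite,field}^'n) set"
  assumes "vec.independent B"
  shows "card (vec.span B) = CARD('a) ^ card B"
proof -
  have fin: "finite B" using assms vec.finiteI_independent by blast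
  show ?thesis using fin assms
  proof (induction B rule: finite_induct)
    case empty
    then show ?case by simp
  next
    case (insert b B)
    have indB: "vec.independent B" using insert.prems vec.independent_mono by blast
    have nb: "b \<notin> vec.span B" using insert.prems insert.hyps(2) by (simp add: vec.independent_insert)
    have eq: "vec.span (insert b B) = (\<lambda>(c, x). c *s b + x) ` (UNIV \<times> vec.span B)"
    proof (rule set_eqI)
      fix y
      show "y \<in> vec.span (insert b B) \<longleftrightarrow> y \<in> (\<lambda>(c, x). c *s b + x) ` (UNIV \<times> vec.span B)"
        unfolding vec.span_breakdown_eq
      proof
        assume "\<exists>k. y - k *s b \<in> vec.span B"
        then obtain c where "y - c *s b \<in> vec.span B" by blast
        then show "y \<in> (\<lambda>(c, x). c *s b + x) ` (UNIV \<times> vec.span B)"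
          by (intro image_eqI[where x="(c, y - c *s b)"]) auto
      next
        assume "y \<in> (\<lambda>(c, x). c *s b + x) ` (UNIV \<times> vec.span B)"
        then obtain c x where "x \<in> vec.span B" "y = c *s b + x" by auto
        then show "\<exists>k. y - k *s b \<in> vec.span B" by (intro exI[of _ c]) auto
      qed
    qed
    have inj: "inj_on (\<lambda>(c, x). c *s b + x) (UNIV \<times> vec.span B)"
    proof (rule inj_onI, clarify)
      fix c1 x1 c2 x2
      assume x1: "x1 \<in> vec.span B" and x2: "x2 \<in> vec.span B" and e: "c1 *s b + x1 = c2 *s b + x2"
      have e2: "(c1 - c2) *s b = x2 - x1" using e
        by (simp add: vector_sub_rdistrib algebra_simps)
      show "c1 = c2 \<and> x1 = x2"
      proof (cases "c1 = c2")
        case True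
        then show ?thesis using e by simp
      next
        case False
        have "x2 - x1 \<in> vec.span B" using x1 x2 vec.span_diff by blast
        hence "(c1 - c2) *s b \<in> vec.span B" using e2 by simp
        hence "(inverse (c1 - c2)) *s ((c1 - c2) *s b) \<in> vec.span B" using vec.span_scale by blast
        have i1: "inverse (c1 - c2) * (c1 - c2) = 1" using False by simp
        have "b = (inverse (c1 - c2)) *s ((c1 - c2) *s b)"
          by (simp only: vector_smult_assoc i1 vector_smult_lid)
        hence "b \<in> vec.span B" using \<open>(inverse (c1 - c2)) *s ((c1 - c2) *s b) \<in> vec.span B\<close> by simp
        then show ?thesis using nb by blast
      qed
    qed
    have "card (vec.span (insert b B)) = CARD('a) * card (vec.span B)"
      unfolding eq using card_image[OF inj] by (simp add: card_cartesian_product)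
    then show ?case using insert.IH[OF indB] insert.hyps by simp
  qed
qed

lemma card_span:
  fixes S :: "('a::{finite,field}^'n) set"
  shows "card (vec.span S) = CARD('a) ^ vec.dim S"
proof -
  obtain B where B: "B \<subseteq> S" "vec.independent B" "S \<subseteq> vec.span B" "card B = vec.dim S"
    using vec.basis_exists by blast
  have "vec.span B = vec.span S"
    using B by (metis vec.span_mono vec.span_span subset_antisym)
  thus ?thesis using card_span_indep[OF B(2)] B(4) by simp
qed

lemma card_subspace:
  fixes U :: "('a::{finite,field}^'n) set"
  assumes "vec.subspace U"
  shows "card U = CARD('a) ^ vec.dim U"
  by (metis assms card_span vec.span_subspace order_refl vec.span_superset)

lemma dim_Un_le:
  fixes S T :: "('a::field^'n) set"
  shows "vec.dim (S \<union> T) \<le> vec.dim S + vec.dim T"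
proof -
  obtain B where B: "B \<subseteq> S" "vec.independent B" "S \<subseteq> vec.span B" "card B = vec.dim S"
    using vec.basis_exists by blast
  obtain C where C: "C \<subseteq> T" "vec.independent C" "T \<subseteq> vec.span C" "card C = vec.dim T"
    using vec.basis_exists by blast
  have fin: "finite (B \<union> C)" using B C vec.finiteI_independent by blast
  have "S \<union> T \<subseteq> vec.span (B \<union> C)"
    using B(3) C(3) vec.span_mono[of B "B \<union> C"] vec.span_mono[of C "B \<union> C"] by blast
  hence "vec.dim (S \<union> T) \<le> card (B \<union> C)" using vec.dim_le_card fin by blast
  also have "\<dots> \<le> card B + card C" by (rule card_Un_le)
  finally show ?thesis using B C by simp
qed

lemma dim_Un_list:
  fixes W :: "('a::field^'n) set"
  shows "vec.dim (W \<union> set xs) \<le> vec.dim W + length xs"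
proof (induction xs)
  case Nil
  then show ?case by simp
next
  case (Cons x xs)
  have "W \<union> set (x # xs) = insert x (W \<union> set xs)" by auto
  then show ?case using Cons by (simp add: vec.dim_insert)
qed

lemma dim_set_list:
  fixes xs :: "('a::field^'n) list"
  shows "vec.dim (set xs) \<le> length xs"
  using dim_Un_list[of "{}" xs] by simp

lemma span_Un_span:
  fixes A B :: "('a::field^'n) set"
  shows "vec.span (A \<union> vec.span B) = vec.span (A \<union> B)"
proof (rule subset_antisym)
  have "A \<union> vec.span B \<subseteq> vec.span (A \<union> B)"
    using vec.span_superset[of "A \<union> B"] vec.span_mono[of B "A \<union> B"] by blast
  thus "vec.span (A \<union> vec.span B) \<subseteq> vec.span (A \<union> B)"
    using vec.span_minimal vec.subspace_span by blast
  show "vec.span (A \<union> B) \<subseteq> vec.span (A \<union> vec.span B)"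
    using vec.span_mono vec.span_superset by (metis Un_mono order_refl)
qed

lemma dim_Un_span:
  fixes A B :: "('a::field^'n) set"
  shows "vec.dim (A \<union> vec.span B) = vec.dim (A \<union> B)"
  using span_Un_span vec.span_eq_dim by blast

lemma dim_Union_le:
  fixes Y :: "('a::field^'n) set set"
  assumes "finite Y" "\<And>L. L \<in> Y \<Longrightarrow> vec.dim L \<le> l"
  shows "vec.dim (\<Union>Y) \<le> card Y * l"
  using assms
proof (induction Y rule: finite_induct)
  case empty
  then show ?case by simp
next
  case (insert L Y)
  have "vec.dim (\<Union>(insert L Y)) \<le> vec.dim L + vec.dim (\<Union>Y)"
    using dim_Un_le[of L "\<Union>Y"] by simp
  also have "\<dots> \<le> l + card Y * l" using insert by (simp add: add_mono)
  finally show ?case using insert.hyps by simp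
qed


definition indl :: "('a::field^'n) set \<Rightarrow> ('a^'n) set \<Rightarrow> nat \<Rightarrow> ('a^'n) list set" where
  "indl U W r = {xs. set xs \<subseteq> U \<and> length xs = r \<and> vec.dim (W \<union> set xs) = vec.dim W + r}"

lemma indl_0: "indl U W 0 = {[]}"
  unfolding indl_def by auto

lemma indl_Suc:
  fixes U W :: "('a::field^'n) set"
  shows "indl U W (Suc r) = (\<Union>v\<in>U - vec.span W. Cons v ` indl U (insert v W) r)"
proof (rule set_eqI)
  fix xs :: "('a^'n) list"
  show "xs \<in> indl U W (Suc r) \<longleftrightarrow> xs \<in> (\<Union>v\<in>U - vec.span W. Cons v ` indl U (insert v W) r)"
  proof
    assume a: "xs \<in> indl U W (Suc r)"
    then obtain v ys where xs: "xs = v # ys" unfolding indl_def by (cases xs) auto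
    have ys: "set ys \<subseteq> U" "length ys = r" "v \<in> U" using a xs unfolding indl_def by auto
    have e: "W \<union> set xs = insert v (W \<union> set ys)" using xs by auto
    have d: "vec.dim (insert v (W \<union> set ys)) = vec.dim W + Suc r"
      using a e unfolding indl_def by simp
    have nv: "v \<notin> vec.span W"
    proof
      assume "v \<in> vec.span W"
      hence "v \<in> vec.span (W \<union> set ys)" using vec.span_mono[of W "W \<union> set ys"] by blast
      hence "vec.dim (insert v (W \<union> set ys)) = vec.dim (W \<union> set ys)" by (simp add: vec.dim_insert)
      thus False using d dim_Un_list[of W ys] ys by simp
    qed
    have dv: "vec.dim (insert v W) = vec.dim W + 1" using nv by (simp add: vec.dim_insert)
    have "insert v W \<union> set ys = insert v (W \<union> set ys)" by auto
    hence "ys \<in> indl U (insert v W) r" using ys d dv unfolding indl_def by simp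
    thus "xs \<in> (\<Union>v\<in>U - vec.span W. Cons v ` indl U (insert v W) r)"
      using xs nv ys by blast
  next
    assume "xs \<in> (\<Union>v\<in>U - vec.span W. Cons v ` indl U (insert v W) r)"
    then obtain v ys where v: "v \<in> U" "v \<notin> vec.span W" and ys: "ys \<in> indl U (insert v W) r"
      and xs: "xs = v # ys" by blast
    have dv: "vec.dim (insert v W) = vec.dim W + 1" using v by (simp add: vec.dim_insert)
    have "W \<union> set xs = insert v W \<union> set ys" using xs by auto
    thus "xs \<in> indl U W (Suc r)" using ys v xs dv unfolding indl_def by simp
  qed
qed

lemma finite_indl: "finite (indl (U::('a::{finite,field}^'n) set) W r)"
proof -
  have "finite {xs. set xs \<subseteq> (UNIV::('a^'n) set) \<and> length xs = r}" by (rule finite_lists_length_eq) simp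
  thus ?thesis by (rule finite_subset[rotated]) (auto simp: indl_def)
qed

lemma card_indl:
  fixes U W :: "('a::{finite,field}^'n) set"
  assumes "vec.subspace U" "W \<subseteq> U" "vec.dim W + r \<le> vec.dim U"
  shows "card (indl U W r) = (\<Prod>i<r. CARD('a) ^ vec.dim U - CARD('a) ^ (vec.dim W + i))"
  using assms(2,3)
proof (induction r arbitrary: W)
  case 0
  then show ?case by (simp add: indl_0)
next
  case (Suc r)
  let ?q = "CARD('a)"
  have spW: "vec.span W \<subseteq> U" using Suc.prems assms(1) vec.span_minimal by blast
  have cardU: "card U = ?q ^ vec.dim U" using card_subspace[OF assms(1)] .
  have cardW: "card (vec.span W) = ?q ^ vec.dim W" by (rule card_span)
  have cdiff: "card (U - vec.span W) = ?q ^ vec.dim U - ?q ^ vec.dim W"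
    using card_Diff_subset[OF finite spW] cardU cardW by simp
  have each: "card (indl U (insert v W) r) = (\<Prod>i<r. ?q ^ vec.dim U - ?q ^ (vec.dim W + Suc i))"
    if v: "v \<in> U - vec.span W" for v
  proof -
    have dv: "vec.dim (insert v W) = vec.dim W + 1" using v by (simp add: vec.dim_insert)
    have "card (indl U (insert v W) r) = (\<Prod>i<r. ?q ^ vec.dim U - ?q ^ (vec.dim (insert v W) + i))"
      using Suc.IH[of "insert v W"] Suc.prems v dv by simp
    thus ?thesis using dv by simp
  qed
  have "card (indl U W (Suc r)) = (\<Sum>v\<in>U - vec.span W. card (Cons v ` indl U (insert v W) r))"
    unfolding indl_Suc
    by (rule card_UN_disjoint) (auto simp: finite_indl)
  also have "\<dots> = (\<Sum>v\<in>U - vec.span W. card (indl U (insert v W) r))"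
    by (intro sum.cong refl card_image) (auto intro: inj_onI)
  also have "\<dots> = (\<Sum>v\<in>U - vec.span W. (\<Prod>i<r. ?q ^ vec.dim U - ?q ^ (vec.dim W + Suc i)))"
    by (intro sum.cong refl each) auto
  also have "\<dots> = (?q ^ vec.dim U - ?q ^ vec.dim W) * (\<Prod>i<r. ?q ^ vec.dim U - ?q ^ (vec.dim W + Suc i))"
    using cdiff by simp
  also have "\<dots> = (\<Prod>i<Suc r. ?q ^ vec.dim U - ?q ^ (vec.dim W + i))"
    by (simp only: prod.lessThan_Suc_shift add_0_right add_Suc_right)
  finally show ?case .
qed


lemma card_fibers:
  assumes "finite A" "finite B" "f ` A \<subseteq> B" "\<And>b. b \<in> B \<Longrightarrow> card {a\<in>A. f a = b} = c"
  shows "card A = card B * c"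
proof -
  have "A = (\<Union>b\<in>B. {a\<in>A. f a = b})" using assms(3) by auto
  moreover have "card (\<Union>b\<in>B. {a\<in>A. f a = b}) = (\<Sum>b\<in>B. card {a\<in>A. f a = b})"
    by (rule card_UN_disjoint) (use assms(1,2) in auto)
  ultimately have "card A = (\<Sum>b\<in>B. card {a\<in>A. f a = b})" by simp
  also have "\<dots> = card B * c" using assms(4) by simp
  finally show ?thesis .
qed

definition Gs :: "nat \<Rightarrow> ('a::field^'n) set \<Rightarrow> ('a^'n) set set" where
  "Gs l W = {L \<in> subspaces_dim l. vec.dim (W \<union> L) = vec.dim W + l}"

definition Bl :: "nat \<Rightarrow> nat \<Rightarrow> nat" where
  "Bl q l = (\<Prod>i<l. q ^ l - q ^ i)"

definition Pc :: "nat \<Rightarrow> nat \<Rightarrow> nat \<Rightarrow> nat \<Rightarrow> nat" where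
  "Pc q k d r = (\<Prod>i<r. q ^ k - q ^ (d + i))"

lemma dim_univ: "vec.dim (UNIV :: ('a::field^'n) set) = CARD('n)"
  by (rule vec_dim_card)

lemma card_Gs:
  fixes W :: "('a::{finite,field}^'n) set"
  assumes "vec.dim W + l \<le> CARD('n)"
  shows "card (Gs l W) * Bl CARD('a) l = Pc CARD('a) CARD('n) (vec.dim W) l"
proof -
  let ?q = "CARD('a)"
  have c1: "card (indl UNIV W l) = Pc ?q CARD('n) (vec.dim W) l"
    using card_indl[of UNIV W l] assms vec.subspace_UNIV by (simp add: card_cart_basis Pc_def)
  have mem: "vec.dim (set xs) = l \<and> vec.span (set xs) \<in> Gs l W" if xs: "xs \<in> indl UNIV W l" for xs
  proof -
    have d: "vec.dim (W \<union> set xs) = vec.dim W + l" "length xs = l" using xs by (auto simp: indl_def)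
    have "vec.dim (set xs) \<le> l" using dim_set_list[of xs] d by simp
    moreover have "vec.dim W + l \<le> vec.dim W + vec.dim (set xs)" using dim_Un_le[of W "set xs"] d by simp
    ultimately have ds: "vec.dim (set xs) = l" by simp
    have "vec.span (set xs) \<in> subspaces_dim l"
      unfolding subspaces_dim_def using ds vec.subspace_span by simp
    moreover have "vec.dim (W \<union> vec.span (set xs)) = vec.dim W + l"
      by (subst dim_Un_span) (rule d(1))
    ultimately show ?thesis using ds unfolding Gs_def by simp
  qed
  have fib: "card {xs \<in> indl UNIV W l. vec.span (set xs) = L} = Bl ?q l" if L: "L \<in> Gs l W" for L
  proof -
    have Ls: "vec.subspace L" "vec.dim L = l" "vec.dim (W \<union> L) = vec.dim W + l"
      using L unfolding Gs_def subspaces_dim_def by auto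
    have "{xs \<in> indl UNIV W l. vec.span (set xs) = L} = indl L {} l"
    proof (rule set_eqI, rule iffI)
      fix xs assume a: "xs \<in> {xs \<in> indl UNIV W l. vec.span (set xs) = L}"
      hence "vec.dim (set xs) = l" using mem by blast
      moreover have "set xs \<subseteq> L" using a vec.span_superset by blast
      ultimately show "xs \<in> indl L {} l" using a unfolding indl_def by simp
    next
      fix xs assume a: "xs \<in> indl L {} l"
      hence s: "set xs \<subseteq> L" "length xs = l" "vec.dim (set xs) = l" unfolding indl_def by auto
      have "vec.span (set xs) = vec.span L" using vec.dim_eq_span[of "set xs" L] s Ls by simp
      hence sp: "vec.span (set xs) = L" using Ls(1) by (simp add: vec.span_eq_iff)
      have "vec.dim (W \<union> set xs) = vec.dim (W \<union> L)"
        using dim_Un_span[of W "set xs"] sp by simp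
      thus "xs \<in> {xs \<in> indl UNIV W l. vec.span (set xs) = L}"
        using s sp Ls unfolding indl_def by simp
    qed
    moreover have "card (indl L {} l) = Bl ?q l"
      using card_indl[of L "{}" l] Ls by (simp add: Bl_def)
    ultimately show ?thesis by simp
  qed
  have "card (indl UNIV W l) = card (Gs l W) * Bl ?q l"
  proof (rule card_fibers[where f="\<lambda>xs. vec.span (set xs)"])
    show "finite (indl UNIV W l)" by (rule finite_indl)
    show "finite (Gs l W)" by simp
    show "(\<lambda>xs. vec.span (set xs)) ` indl UNIV W l \<subseteq> Gs l W" using mem by blast
  qed (rule fib)
  thus ?thesis using c1 by simp
qed


definition osl :: "nat \<Rightarrow> ('a::field^'n) set \<Rightarrow> nat \<Rightarrow> ('a^'n) set list set" where
  "osl l W t = {Ls. length Ls = t \<and> set Ls \<subseteq> subspaces_dim l \<and>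
                    vec.dim (W \<union> \<Union>(set Ls)) = vec.dim W + t * l}"

lemma finite_osl: "finite (osl l (W::('a::{finite,field}^'n) set) t)"
proof -
  have "finite {xs. set xs \<subseteq> (UNIV::('a^'n) set set) \<and> length xs = t}" by (rule finite_lists_length_eq) simp
  thus ?thesis by (rule finite_subset[rotated]) (auto simp: osl_def)
qed

lemma dim_Union_list:
  fixes Ms :: "('a::field^'n) set list"
  assumes "set Ms \<subseteq> subspaces_dim l"
  shows "vec.dim (\<Union>(set Ms)) \<le> length Ms * l"
proof -
  have "vec.dim (\<Union>(set Ms)) \<le> card (set Ms) * l"
    by (rule dim_Union_le) (use assms in \<open>auto simp: subspaces_dim_def\<close>)
  also have "\<dots> \<le> length Ms * l" by (simp add: card_length)
  finally show ?thesis .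
qed

lemma Pc_add: "Pc q k d (a + b) = Pc q k d a * Pc q k (d + a) b"
  unfolding Pc_def
proof (induction b)
  case 0
  then show ?case by simp
next
  case (Suc b)
  then show ?case by (simp add: add.assoc)
qed

lemma osl_0: "osl l W 0 = {[]}"
  unfolding osl_def by auto

lemma osl_Suc:
  fixes W :: "('a::field^'n) set"
  shows "osl l W (Suc t) = (\<Union>L\<in>Gs l W. Cons L ` osl l (W \<union> L) t)"
proof (rule set_eqI, rule iffI)
  fix Ls assume a: "Ls \<in> osl l W (Suc t)"
  then obtain L Ms where Ls: "Ls = L # Ms" unfolding osl_def by (cases Ls) auto
  have h: "length Ms = t" "L \<in> subspaces_dim l" "set Ms \<subseteq> subspaces_dim l"
    "vec.dim ((W \<union> L) \<union> \<Union>(set Ms)) = vec.dim W + l + t * l"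
    using a Ls unfolding osl_def by (auto simp: Un_assoc)
  have dL: "vec.dim L = l" using h(2) by (simp add: subspaces_dim_def)
  have "vec.dim ((W \<union> L) \<union> \<Union>(set Ms)) \<le> vec.dim (W \<union> L) + t * l"
    using dim_Un_le[of "W \<union> L" "\<Union>(set Ms)"] dim_Union_list[OF h(3)] h(1) by simp
  moreover have "vec.dim (W \<union> L) \<le> vec.dim W + l" using dim_Un_le[of W L] dL by simp
  ultimately have dWL: "vec.dim (W \<union> L) = vec.dim W + l" using h(4) by simp
  hence "L \<in> Gs l W" using h(2) unfolding Gs_def by simp
  moreover have "Ms \<in> osl l (W \<union> L) t" using h dWL unfolding osl_def by simp
  ultimately show "Ls \<in> (\<Union>L\<in>Gs l W. Cons L ` osl l (W \<union> L) t)" using Ls by blast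
next
  fix Ls assume "Ls \<in> (\<Union>L\<in>Gs l W. Cons L ` osl l (W \<union> L) t)"
  then obtain L Ms where L: "L \<in> Gs l W" and Ms: "Ms \<in> osl l (W \<union> L) t" and Ls: "Ls = L # Ms" by blast
  have "W \<union> \<Union>(set Ls) = (W \<union> L) \<union> \<Union>(set Ms)" using Ls by auto
  thus "Ls \<in> osl l W (Suc t)" using L Ms Ls unfolding osl_def Gs_def by auto
qed

lemma card_osl:
  fixes W :: "('a::{finite,field}^'n) set"
  assumes "vec.dim W + t * l \<le> CARD('n)"
  shows "card (osl l W t) * Bl CARD('a) l ^ t = Pc CARD('a) CARD('n) (vec.dim W) (t * l)"
  using assms
proof (induction t arbitrary: W)
  case 0
  then show ?case by (simp add: osl_0 Pc_def)
next
  case (Suc t)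
  let ?q = "CARD('a)" and ?k = "CARD('n)"
  have each: "card (osl l (W \<union> L) t) * Bl ?q l ^ t = Pc ?q ?k (vec.dim W + l) (t * l)"
    if L: "L \<in> Gs l W" for L
  proof -
    have d: "vec.dim (W \<union> L) = vec.dim W + l" using L unfolding Gs_def by simp
    show ?thesis using Suc.IH[of "W \<union> L"] Suc.prems d by (simp add: add.assoc)
  qed
  have "card (osl l W (Suc t)) = (\<Sum>L\<in>Gs l W. card (Cons L ` osl l (W \<union> L) t))"
    unfolding osl_Suc
    by (rule card_UN_disjoint) (auto simp: finite_osl)
  also have "\<dots> = (\<Sum>L\<in>Gs l W. card (osl l (W \<union> L) t))"
    by (intro sum.cong refl card_image) (auto intro: inj_onI)
  finally have c: "card (osl l W (Suc t)) = (\<Sum>L\<in>Gs l W. card (osl l (W \<union> L) t))" .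
  have "card (osl l W (Suc t)) * Bl ?q l ^ Suc t
        = (\<Sum>L\<in>Gs l W. card (osl l (W \<union> L) t) * Bl ?q l ^ t) * Bl ?q l"
    unfolding c by (simp add: sum_distrib_right sum_distrib_left ac_simps)
  also have "\<dots> = (\<Sum>L\<in>Gs l W. Pc ?q ?k (vec.dim W + l) (t * l)) * Bl ?q l"
    using each by simp
  also have "\<dots> = (card (Gs l W) * Bl ?q l) * Pc ?q ?k (vec.dim W + l) (t * l)" by simp
  also have "\<dots> = Pc ?q ?k (vec.dim W) l * Pc ?q ?k (vec.dim W + l) (t * l)"
    using card_Gs[of W l] Suc.prems by simp
  also have "\<dots> = Pc ?q ?k (vec.dim W) (Suc t * l)" using Pc_add[of ?q ?k "vec.dim W" l "t * l"] by simp
  finally show ?case .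
qed


definition fam :: "nat \<Rightarrow> ('a::field^'n) set \<Rightarrow> nat \<Rightarrow> ('a^'n) set set set" where
  "fam l W t = {Y. Y \<subseteq> subspaces_dim l \<and> card Y = t \<and> vec.dim (W \<union> \<Union>Y) = vec.dim W + t * l}"

lemma osl_distinct:
  fixes W :: "('a::{finite,field}^'n) set"
  assumes "0 < l" "Ls \<in> osl l W t"
  shows "distinct Ls"
proof (rule ccontr)
  assume nd: "\<not> distinct Ls"
  have h: "length Ls = t" "set Ls \<subseteq> subspaces_dim l" "vec.dim (W \<union> \<Union>(set Ls)) = vec.dim W + t * l"
    using assms(2) unfolding osl_def by auto
  have "card (set Ls) \<noteq> length Ls" using nd card_distinct by blast
  hence lt: "card (set Ls) < t" using card_length[of Ls] h(1) by simp
  have "vec.dim (\<Union>(set Ls)) \<le> card (set Ls) * l"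
    by (rule dim_Union_le) (use h(2) in \<open>auto simp: subspaces_dim_def\<close>)
  also have "\<dots> < t * l" using lt assms(1) by simp
  finally have "vec.dim (W \<union> \<Union>(set Ls)) < vec.dim W + t * l"
    using dim_Un_le[of W "\<Union>(set Ls)"] by simp
  thus False using h(3) by simp
qed

lemma card_osl_fam:
  fixes W :: "('a::{finite,field}^'n) set"
  assumes "0 < l"
  shows "card (osl l W t) = card (fam l W t) * fact t"
proof (rule card_fibers[where f=set])
  show "finite (osl l W t)" by (rule finite_osl)
  show "finite (fam l W t)" by simp
  show "set ` osl l W t \<subseteq> fam l W t"
  proof
    fix Y assume "Y \<in> set ` osl l W t"
    then obtain Ls where Ls: "Ls \<in> osl l W t" "Y = set Ls" by blast
    have "distinct Ls" by (rule osl_distinct[OF assms Ls(1)])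
    thus "Y \<in> fam l W t" using Ls unfolding osl_def fam_def by (auto simp: distinct_card)
  qed
  fix Y assume Y: "Y \<in> fam l W t"
  have "{Ls \<in> osl l W t. set Ls = Y} = permutations_of_set Y"
  proof (rule set_eqI, rule iffI)
    fix Ls assume "Ls \<in> {Ls \<in> osl l W t. set Ls = Y}"
    thus "Ls \<in> permutations_of_set Y"
      using osl_distinct[OF assms] unfolding permutations_of_set_def by blast
  next
    fix Ls assume "Ls \<in> permutations_of_set Y"
    hence "set Ls = Y" "distinct Ls" unfolding permutations_of_set_def by auto
    thus "Ls \<in> {Ls \<in> osl l W t. set Ls = Y}"
      using Y unfolding osl_def fam_def by (auto simp: distinct_card)
  qed
  moreover have "card Y = t" using Y unfolding fam_def by simp
  ultimately show "card {Ls \<in> osl l W t. set Ls = Y} = fact t" by simp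
qed

lemma card_fam:
  fixes W :: "('a::{finite,field}^'n) set"
  assumes "0 < l" "vec.dim W + t * l \<le> CARD('n)"
  shows "card (fam l W t) * fact t * Bl CARD('a) l ^ t = Pc CARD('a) CARD('n) (vec.dim W) (t * l)"
  using card_osl[OF assms(2)] card_osl_fam[OF assms(1), of W t] by simp


definition Ssum :: "nat \<Rightarrow> nat" where "Ssum r = (\<Sum>i<r. i)"

lemma Ssum_add: "Ssum (a + b) = Ssum a + a * b + Ssum b"
  unfolding Ssum_def by (induction b) (auto simp: algebra_simps)

lemma Ssum_mult: "Ssum (t * l) = t * Ssum l + l * l * Ssum t"
proof (induction t)
  case 0 then show ?case by (simp add: Ssum_def)
next
  case (Suc t)
  have "Ssum (Suc t * l) = Ssum (l + t * l)" by simp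
  also have "\<dots> = Ssum l + l * (t * l) + Ssum (t * l)" by (rule Ssum_add)
  also have "Ssum (Suc t) = Ssum t + t" by (simp add: Ssum_def)
  ultimately show ?case using Suc by (simp add: algebra_simps)
qed

lemma Ssum_double: "t * (t - 1) = 2 * Ssum t"
proof (induction t)
  case 0 then show ?case by (simp add: Ssum_def)
next
  case (Suc t)
  have "Ssum (Suc t) = Ssum t + t" by (simp add: Ssum_def)
  then show ?case using Suc by (cases t) (simp_all add: algebra_simps)
qed

lemma fact_choose_prod: "(fact l :: nat) ^ t * (\<Prod>i<t. (t - i) * l choose l) = fact (t * l)"
proof (induction t)
  case 0 then show ?case by simp
next
  case (Suc t)
  have "(\<Prod>i<Suc t. (Suc t - i) * l choose l) = (Suc t * l choose l) * (\<Prod>i<t. (t - i) * l choose l)"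
    by (simp only: prod.lessThan_Suc_shift diff_Suc_Suc minus_nat.diff_0)
  hence "(fact l :: nat) ^ Suc t * (\<Prod>i<Suc t. (Suc t - i) * l choose l)
        = fact l * fact (t * l) * (Suc t * l choose l)"
    using Suc by (simp add: algebra_simps)
  also have "\<dots> = fact (Suc t * l)"
    using binomial_fact_lemma[of l "Suc t * l"] by (simp add: algebra_simps)
  finally show ?case .
qed

lemma qint_pos: "2 \<le> q \<Longrightarrow> 0 < a \<Longrightarrow> 0 < qint q a"
proof -
  assume q: "2 \<le> q" and a: "0 < a"
  have "(1::real) < real q ^ a" using q a by (simp add: one_less_power)
  thus ?thesis using q unfolding qint_def by (simp add: divide_pos_pos)
qed

lemma real_qdiff:
  assumes "2 \<le> q" "i \<le> k"
  shows "real (q ^ k - q ^ i) = real q ^ i * (real q - 1) * qint q (k - i)"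
proof -
  have le: "q ^ i \<le> q ^ k" using assms by (simp add: power_increasing)
  have q1: "real q - 1 \<noteq> 0" using assms by simp
  have "real q ^ k = real q ^ i * real q ^ (k - i)" using assms(2) by (simp add: power_add[symmetric])
  hence "real (q ^ k - q ^ i) = real q ^ i * (real q ^ (k - i) - 1)"
    using le by (simp add: of_nat_diff algebra_simps)
  thus ?thesis using q1 unfolding qint_def by simp
qed

lemma Pc_real:
  assumes "2 \<le> q" "d + r \<le> k"
  shows "real (Pc q k d r) = real q ^ (d * r + Ssum r) * (real q - 1) ^ r * (\<Prod>i<r. qint q (k - d - i))"
proof -
  have "real (Pc q k d r) = (\<Prod>i<r. real q ^ (d + i) * (real q - 1) * qint q (k - (d + i)))"
    unfolding Pc_def of_nat_prod using assms by (intro prod.cong refl real_qdiff) auto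
  also have "\<dots> = (\<Prod>i<r. real q ^ (d + i)) * (real q - 1) ^ r * (\<Prod>i<r. qint q (k - d - i))"
    by (simp add: prod.distrib)
  also have "(\<Prod>i<r. real q ^ (d + i)) = real q ^ (\<Sum>i<r. d + i)" by (simp add: power_sum)
  also have "(\<Sum>i<r. d + i) = d * r + Ssum r" by (simp add: Ssum_def sum.distrib)
  finally show ?thesis .
qed

lemma Pc_pos: "2 \<le> q \<Longrightarrow> d + r \<le> k \<Longrightarrow> 0 < Pc q k d r"
  unfolding Pc_def
  by (rule prod_pos) (auto intro!: power_strict_increasing)

lemma Bl_eq: "Bl q l = Pc q l 0 l"
  unfolding Bl_def Pc_def by simp

lemma Bl_pos: "2 \<le> q \<Longrightarrow> 0 < Bl q l"
  unfolding Bl_eq by (rule Pc_pos) auto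

lemma cnt_eq:
  assumes "2 \<le> q" "t * l \<le> k"
  shows "cnt q k l t = real (Pc q k 0 (t * l)) / (fact t * real (Bl q l) ^ t)"
proof -
  define Qk where "Qk = (\<Prod>i<t * l. qint q (k - i))"
  define Ql where "Ql = (\<Prod>i<l. qint q (l - i))"
  have Ql0: "Ql \<noteq> 0" unfolding Ql_def using qint_pos[OF assms(1)]
    by (subst prod_zero_iff) (auto simp: less_imp_neq[symmetric])
  have q0: "real q \<noteq> 0" "real q - 1 \<noteq> 0" using assms by auto
  have h1: "real (Pc q k 0 (t * l)) = real q ^ Ssum (t * l) * (real q - 1) ^ (t * l) * Qk"
    using Pc_real[OF assms(1), of 0 "t * l" k] assms unfolding Qk_def by simp
  have h2: "real (Bl q l) = real q ^ Ssum l * (real q - 1) ^ l * Ql"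
    using Pc_real[OF assms(1), of 0 l l] unfolding Ql_def Bl_eq by simp
  have e: "t * (t - 1) * l\<^sup>2 div 2 = l * l * Ssum t"
    using Ssum_double[of t] by (simp add: power2_eq_square)
  have h3: "Ssum (t * l) = t * Ssum l + l * l * Ssum t" by (rule Ssum_mult)
  have h4: "(fact l :: real) ^ t * (\<Prod>i<t. real ((t - i) * l choose l)) = fact (t * l)"
    using arg_cong[OF fact_choose_prod[of l t], of real] by (simp add: of_nat_prod)
  have "cnt q k l t = ((fact l :: real) ^ t * (\<Prod>i<t. real ((t - i) * l choose l)))
        * real q ^ (l * l * Ssum t) / (fact (t * l) * fact t) * (Qk / Ql ^ t)"
    unfolding cnt_def e Qk_def Ql_def by (simp add: algebra_simps)
  also have "\<dots> = real q ^ (l * l * Ssum t) / fact t * (Qk / Ql ^ t)"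
    unfolding h4 by simp
  also have "\<dots> = real (Pc q k 0 (t * l)) / (fact t * real (Bl q l) ^ t)"
    unfolding h1 h2 h3 using q0 Ql0
    by (simp add: field_simps power_add power_mult_distrib power_mult[symmetric] mult.commute)
  finally show ?thesis .
qed

lemma ratio_eq:
  assumes "2 \<le> q" "n * l + m * l \<le> k"
  shows "real (Pc q k (n * l) (m * l)) / real (Pc q k 0 (m * l))
         = real q ^ (m * n * l\<^sup>2) * (\<Prod>i<m * l. qint q (k - n * l - i) / qint q (k - i))"
proof -
  have each: "real (q ^ k - q ^ (n * l + i)) / real (q ^ k - q ^ (0 + i))
      = real q ^ (n * l) * (qint q (k - n * l - i) / qint q (k - i))" if i: "i < m * l" for i
  proof -
    have i1: "n * l + i \<le> k" "i \<le> k" using i assms by auto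
    have pos: "0 < qint q (k - i)" using qint_pos[OF assms(1)] i1 i assms by simp
    have q0: "real q \<noteq> 0" "real q - 1 \<noteq> 0" using assms by auto
    show ?thesis
      unfolding real_qdiff[OF assms(1) i1(1)] real_qdiff[OF assms(1) i1(2)] add_0
      using pos q0 by (simp add: field_simps power_add)
  qed
  have "real (Pc q k (n * l) (m * l)) / real (Pc q k 0 (m * l))
      = (\<Prod>i<m * l. real (q ^ k - q ^ (n * l + i)) / real (q ^ k - q ^ (0 + i)))"
    unfolding Pc_def of_nat_prod by (simp add: prod_dividef)
  also have "\<dots> = (\<Prod>i<m * l. real q ^ (n * l) * (qint q (k - n * l - i) / qint q (k - i)))"
    by (intro prod.cong refl each) auto
  also have "\<dots> = (real q ^ (n * l)) ^ (m * l) * (\<Prod>i<m * l. qint q (k - n * l - i) / qint q (k - i))"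
    by (simp only: prod.distrib prod_constant card_lessThan)
  also have "(real q ^ (n * l)) ^ (m * l) = real q ^ (m * n * l\<^sup>2)"
    by (simp add: power_mult[symmetric] power2_eq_square algebra_simps)
  finally show ?thesis .
qed


lemma indep_family_fam: "indep_family l t = (fam l {} t :: ('a::field^'n) set set set)"
  unfolding indep_family_def fam_def by simp

lemma sub_indep:
  fixes Z :: "('a::{finite,field}^'n) set set"
  assumes Z: "Z \<in> indep_family l t" and X: "X \<subseteq> Z"
  shows "X \<in> indep_family l (card X)"
proof -
  have Zs: "Z \<subseteq> subspaces_dim l" "card Z = t" "vec.dim (\<Union>Z) = t * l"
    using Z unfolding indep_family_def by auto
  have le: "\<And>Y. Y \<subseteq> Z \<Longrightarrow> vec.dim (\<Union>Y) \<le> card Y * l"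
    using Zs(1) by (intro dim_Union_le) (auto simp: subspaces_dim_def)
  have "\<Union>Z = \<Union>X \<union> \<Union>(Z - X)" using X by blast
  hence "t * l \<le> vec.dim (\<Union>X) + vec.dim (\<Union>(Z - X))" using Zs(3) dim_Un_le by metis
  also have "\<dots> \<le> vec.dim (\<Union>X) + card (Z - X) * l" using le[of "Z - X"] by simp
  finally have "t * l \<le> vec.dim (\<Union>X) + (t - card X) * l"
    using card_Diff_subset[OF finite X] Zs(2) by simp
  moreover have "card X \<le> t" using card_mono[OF finite X] Zs(2) by simp
  moreover have "card X * l \<le> t * l" using calculation(2) by simp
  moreover have "(t - card X) * l = t * l - card X * l" by (simp add: diff_mult_distrib)
  ultimately have "card X * l \<le> vec.dim (\<Union>X)" by arith
  hence "vec.dim (\<Union>X) = card X * l" using le[OF X] by simp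
  thus ?thesis using X Zs(1) unfolding indep_family_def by auto
qed

lemma nbr:
  fixes X :: "('a::{finite,field}^'n) set set"
  assumes l: "0 < l" and X: "X \<in> indep_family l n"
  shows "{Y \<in> indep_family l m. X \<union> Y \<in> indep_family l (n + m)} = fam l (\<Union>X) m"
proof -
  have Xs: "X \<subseteq> subspaces_dim l" "card X = n" "vec.dim (\<Union>X) = n * l"
    using X unfolding indep_family_def by auto
  show ?thesis
  proof (rule set_eqI, rule iffI)
    fix Y assume "Y \<in> {Y \<in> indep_family l m. X \<union> Y \<in> indep_family l (n + m)}"
    hence Y: "Y \<subseteq> subspaces_dim l" "card Y = m" and XY: "vec.dim (\<Union>(X \<union> Y)) = (n + m) * l"
      unfolding indep_family_def by auto
    have "\<Union>X \<union> \<Union>Y = \<Union>(X \<union> Y)" by blast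
    thus "Y \<in> fam l (\<Union>X) m" using Y XY Xs unfolding fam_def by (simp add: algebra_simps)
  next
    fix Y assume "Y \<in> fam l (\<Union>X) m"
    hence Y: "Y \<subseteq> subspaces_dim l" "card Y = m" and XY: "vec.dim (\<Union>X \<union> \<Union>Y) = n * l + m * l"
      unfolding fam_def using Xs by auto
    have leY: "\<And>Y'. Y' \<subseteq> Y \<Longrightarrow> vec.dim (\<Union>Y') \<le> card Y' * l"
      using Y(1) by (intro dim_Union_le) (auto simp: subspaces_dim_def)
    have "n * l + m * l \<le> vec.dim (\<Union>X) + vec.dim (\<Union>Y)" using XY dim_Un_le by metis
    hence dY: "vec.dim (\<Union>Y) = m * l" using leY[of Y] Y(2) Xs(3) by simp
    have disj: "X \<inter> Y = {}"
    proof (rule ccontr)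
      assume "X \<inter> Y \<noteq> {}"
      then obtain L where L: "L \<in> X" "L \<in> Y" by blast
      have "\<Union>X \<union> \<Union>Y = \<Union>X \<union> \<Union>(Y - {L})" using L by blast
      hence "n * l + m * l \<le> vec.dim (\<Union>X) + vec.dim (\<Union>(Y - {L}))" using XY dim_Un_le by metis
      also have "\<dots> \<le> n * l + (m - 1) * l" using leY[of "Y - {L}"] Xs(3) L Y(2) by simp
      finally have "m * l \<le> (m - 1) * l" by simp
      hence "m \<le> m - 1" using l by simp
      moreover have "0 < m" using Y(2) L(2) card_gt_0_iff[of Y] by auto
      ultimately show False by simp
    qed
    have cXY: "card (X \<union> Y) = n + m" using card_Un_disjoint[OF finite finite disj] Xs Y by simp
    have "\<Union>(X \<union> Y) = \<Union>X \<union> \<Union>Y" by blast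
    hence "X \<union> Y \<in> indep_family l (n + m)"
      using cXY XY Xs Y unfolding indep_family_def by (simp add: algebra_simps)
    moreover have "Y \<in> indep_family l m" using Y dY unfolding indep_family_def by simp
    ultimately show "Y \<in> {Y \<in> indep_family l m. X \<union> Y \<in> indep_family l (n + m)}" by simp
  qed
qed


lemma cover:
  fixes ZZ XX YY :: "('a::{finite,field}^'n) set set set" and l n m :: nat
  defines "ZZ \<equiv> indep_family l (n + m)" and "XX \<equiv> indep_family l n" and "YY \<equiv> indep_family l m"
    and "E \<equiv> (\<lambda>X Y. X \<union> Y \<in> ZZ)"
    and "Cm \<equiv> (\<lambda>Z. (\<lambda>X. (X, Z - X)) ` {X. X \<subseteq> Z \<and> card X = n})"
  shows "induced_matching_cover XX YY E (Cm ` ZZ) \<and> (\<forall>C\<in>Cm ` ZZ. card C = (n + m) choose n)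
         \<and> card (Cm ` ZZ) = card ZZ"
proof -
  have Zc: "card Z = n + m" if "Z \<in> ZZ" for Z using that unfolding ZZ_def indep_family_def by simp
  have mem: "X \<in> XX \<and> Z - X \<in> YY \<and> E X (Z - X)" if Z: "Z \<in> ZZ" "X \<subseteq> Z" "card X = n" for Z X
  proof -
    have "X \<in> XX" using sub_indep[of Z l "n + m" X] Z unfolding ZZ_def XX_def by simp
    moreover have "card (Z - X) = m" using Z Zc[OF Z(1)] card_Diff_subset[OF finite Z(2)] by simp
    hence "Z - X \<in> YY" using sub_indep[of Z l "n + m" "Z - X"] Z unfolding ZZ_def YY_def by auto
    moreover have "X \<union> (Z - X) = Z" using Z by blast
    ultimately show ?thesis unfolding E_def using Z by simp
  qed
  have key: "X1 = X2" if Z: "Z \<in> ZZ" "X1 \<subseteq> Z" "X2 \<subseteq> Z" "card X1 = n" "card X2 = n"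
    and e: "E X1 (Z - X2)" for Z X1 X2
  proof -
    have cU: "card (X1 \<union> (Z - X2)) = n + m" using e Zc unfolding E_def by blast
    have "X1 \<union> (Z - X2) = Z"
      by (rule card_subset_eq[OF finite]) (use Z cU Zc[OF Z(1)] in auto)
    have c2: "card (Z - X2) = m" using Z Zc[OF Z(1)] card_Diff_subset[OF finite Z(3)] by simp
    have "card X1 + card (Z - X2) = card (X1 \<union> (Z - X2)) + card (X1 \<inter> (Z - X2))"
      by (rule card_Un_Int) simp_all
    hence "card (X1 \<inter> (Z - X2)) = 0" using cU c2 Z by simp
    hence "X1 \<inter> (Z - X2) = {}" by simp
    hence "X1 \<subseteq> X2" using Z by blast
    thus ?thesis using Z by (metis card_subset_eq finite)
  qed
  have unZ: "X \<union> Y = Z" if "(X, Y) \<in> Cm Z" for X Y Z using that unfolding Cm_def by auto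
  have sub: "Cm Z \<subseteq> bip_edges XX YY E" if "Z \<in> ZZ" for Z
    using mem[OF that] unfolding Cm_def bip_edges_def by auto
  have ind: "induced_matching XX YY E (Cm Z)" if Z: "Z \<in> ZZ" for Z
  proof -
    have pw: "X1 \<noteq> X2 \<and> Y1 \<noteq> Y2 \<and> \<not> E X1 Y2 \<and> \<not> E X2 Y1"
      if p1: "(X1, Y1) \<in> Cm Z" and p2: "(X2, Y2) \<in> Cm Z" and ne: "(X1, Y1) \<noteq> (X2, Y2)"
      for X1 Y1 X2 Y2
    proof -
      have h1: "X1 \<subseteq> Z" "card X1 = n" "Y1 = Z - X1" using p1 unfolding Cm_def by auto
      have h2: "X2 \<subseteq> Z" "card X2 = n" "Y2 = Z - X2" using p2 unfolding Cm_def by auto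
      have "X1 \<noteq> X2" using ne h1 h2 by auto
      moreover have "Y1 \<noteq> Y2" using h1 h2 \<open>X1 \<noteq> X2\<close> by blast
      moreover have "\<not> E X1 Y2" using key[OF Z h1(1) h2(1) h1(2) h2(2)] h2(3) \<open>X1 \<noteq> X2\<close> by blast
      moreover have "\<not> E X2 Y1" using key[OF Z h2(1) h1(1) h2(2) h1(2)] h1(3) \<open>X1 \<noteq> X2\<close> by blast
      ultimately show ?thesis by blast
    qed
    show ?thesis
      unfolding induced_matching_def
    proof (intro conjI sub[OF Z])
      show "\<forall>(x1, y1)\<in>Cm Z. \<forall>(x2, y2)\<in>Cm Z. (x1, y1) \<noteq> (x2, y2) \<longrightarrow>
        x1 \<noteq> x2 \<and> y1 \<noteq> y2 \<and> \<not> E x1 y2 \<and> \<not> E x2 y1"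
        using pw by fast
    qed
  qed
  have nonempty: "Cm Z \<noteq> {}" if Z: "Z \<in> ZZ" for Z
  proof -
    obtain X where "X \<subseteq> Z" "card X = n" using obtain_subset_with_card_n[of n Z] Zc[OF Z] by auto
    thus ?thesis unfolding Cm_def by auto
  qed
  have part: "partition_on (bip_edges XX YY E) (Cm ` ZZ)"
  proof (rule partition_onI)
    show "\<Union>(Cm ` ZZ) = bip_edges XX YY E"
    proof
      show "\<Union>(Cm ` ZZ) \<subseteq> bip_edges XX YY E" using sub by blast
      show "bip_edges XX YY E \<subseteq> \<Union>(Cm ` ZZ)"
      proof
        fix p assume "p \<in> bip_edges XX YY E"
        then obtain X Y where p: "p = (X, Y)" "X \<in> XX" "Y \<in> YY" "X \<union> Y \<in> ZZ"
          unfolding bip_edges_def E_def by auto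
        have cX: "card X = n" "card Y = m" using p unfolding XX_def YY_def indep_family_def by auto
        have "card X + card Y = card (X \<union> Y) + card (X \<inter> Y)"
          by (rule card_Un_Int) simp_all
        hence "X \<inter> Y = {}" using cX Zc[OF p(4)] by simp
        hence "Y = (X \<union> Y) - X" by blast
        hence "(X, Y) \<in> Cm (X \<union> Y)" unfolding Cm_def using cX
          by (intro image_eqI[where x=X]) auto
        thus "p \<in> \<Union>(Cm ` ZZ)" using p by blast
      qed
    qed
  next
    fix P Q assume "P \<in> Cm ` ZZ" "Q \<in> Cm ` ZZ" "P \<noteq> Q"
    then obtain Z1 Z2 where "P = Cm Z1" "Q = Cm Z2" "Z1 \<noteq> Z2" by blast
    moreover have "\<not> (p \<in> Cm Z1 \<and> p \<in> Cm Z2)" if "Z1 \<noteq> Z2" for p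
      using unZ[of "fst p" "snd p" Z1] unZ[of "fst p" "snd p" Z2] that by auto
    ultimately show "disjnt P Q" unfolding disjnt_def by blast
  next
    show "{} \<notin> Cm ` ZZ" using nonempty by auto
  qed
  have cardC: "card (Cm Z) = (n + m) choose n" if Z: "Z \<in> ZZ" for Z
  proof -
    have "card (Cm Z) = card {X. X \<subseteq> Z \<and> card X = n}"
      unfolding Cm_def by (rule card_image) (auto intro: inj_onI)
    also have "\<dots> = card Z choose n" by (rule n_subsets) simp
    finally show ?thesis using Zc[OF Z] by simp
  qed
  have inj: "inj_on Cm ZZ"
  proof (rule inj_onI)
    fix Z1 Z2 assume Z: "Z1 \<in> ZZ" "Z2 \<in> ZZ" "Cm Z1 = Cm Z2"
    obtain p where "p \<in> Cm Z1" using nonempty[OF Z(1)] by blast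
    thus "Z1 = Z2" using Z(3) unZ by (metis prod.collapse)
  qed
  show ?thesis
    using ind part cardC card_image[OF inj] unfolding induced_matching_cover_def by blast
qed


theorem theorem4:
  fixes k m n l :: nat
  assumes "0 < k" "0 < m" "0 < n" "0 < l"
    and "n * l + m * l \<le> k"
    and "CARD('n) = k"
  defines "q \<equiv> CARD('a::{finite, field})"
    and "XX \<equiv> (indep_family l n :: ('a ^ 'n) set set set)"
    and "YY \<equiv> (indep_family l m :: ('a ^ 'n) set set set)"
    and "E \<equiv> (\<lambda>X Y. X \<union> Y \<in> (indep_family l (n + m) :: ('a ^ 'n) set set set))"
  shows "\<exists>K F D S \<C>.
           bipartite_caching_graph XX YY E K F D \<and>
           real K = cnt q k l n \<and> real F = cnt q k l m \<and>
           induced_matching_cover XX YY E \<C> \<and> card \<C> = S \<and>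
           (\<forall>C\<in>\<C>. card C = (n + m) choose n) \<and>
           real S = cnt q k l (n + m) \<and>
           1 - real D / real F =
             1 - real q ^ (m * n * l\<^sup>2) * (\<Prod>i<m * l. qint q (k - n * l - i) / qint q (k - i)) \<and>
           real K * (1 - (1 - real D / real F)) / (real S / real F) = real ((n + m) choose n)"
proof -
  have hq: "2 \<le> q" unfolding q_def by (rule card_field_ge2)
  define ZZ where "ZZ = (indep_family l (n + m) :: ('a ^ 'n) set set set)"
  define Cm where "Cm = (\<lambda>Z::('a ^ 'n) set set. (\<lambda>X. (X, Z - X)) ` {X. X \<subseteq> Z \<and> card X = n})"
  have cv: "induced_matching_cover XX YY E (Cm ` ZZ) \<and> (\<forall>C\<in>Cm ` ZZ. card C = (n + m) choose n)
         \<and> card (Cm ` ZZ) = card ZZ"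
    using cover[of l n m] unfolding XX_def YY_def E_def ZZ_def Cm_def by simp
  have cfam: "card (indep_family l t :: ('a ^ 'n) set set set) * fact t * Bl q l ^ t = Pc q k 0 (t * l)"
    if "t * l \<le> k" for t
    using card_fam[of l "{} :: ('a ^ 'n) set" t] that assms(4,6) unfolding indep_family_fam q_def by simp
  have g: "real g = real (Pc q k 0 (t * l)) / (fact t * real (Bl q l) ^ t)"
    if "g * fact t * Bl q l ^ t = Pc q k 0 (t * l)" for g t
  proof -
    have "0 < Bl q l" using Bl_pos[OF hq] .
    hence ne: "(fact t * real (Bl q l) ^ t) \<noteq> 0" by simp
    have "real g * (fact t * real (Bl q l) ^ t) = real (Pc q k 0 (t * l))"
      using arg_cong[OF that, of real] by (simp add: mult.assoc)
    thus ?thesis using ne by (simp add: field_simps)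
  qed
  have nl: "n * l \<le> k" "m * l \<le> k" "(n + m) * l \<le> k" using assms(5) by (auto simp: algebra_simps)
  have K: "real (card XX) = cnt q k l n"
    using g[OF cfam[OF nl(1)]] cnt_eq[OF hq nl(1)] unfolding XX_def by simp
  have F: "real (card YY) = cnt q k l m"
    using g[OF cfam[OF nl(2)]] cnt_eq[OF hq nl(2)] unfolding YY_def by simp
  have S: "real (card ZZ) = cnt q k l (n + m)"
    using g[OF cfam[OF nl(3)]] cnt_eq[OF hq nl(3)] unfolding ZZ_def by simp
  define c where "c = fact m * Bl q l ^ m"
  have c0: "0 < c" unfolding c_def using Bl_pos[OF hq] by simp
  define D where "D = Pc q k (n * l) (m * l) div c"
  have degc: "card {Y \<in> YY. E X Y} * c = Pc q k (n * l) (m * l)" if X: "X \<in> XX" for X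
  proof -
    have dX: "vec.dim (\<Union>X) = n * l" using X unfolding XX_def indep_family_def by simp
    have eq: "{Y \<in> YY. E X Y} = fam l (\<Union>X) m"
      using nbr[OF assms(4) X[unfolded XX_def], of m] unfolding YY_def E_def .
    have "card (fam l (\<Union>X) m) * fact m * Bl CARD('a) l ^ m = Pc CARD('a) CARD('n) (vec.dim (\<Union>X)) (m * l)"
      by (rule card_fam) (use assms(4,5,6) dX in simp_all)
    thus ?thesis unfolding eq c_def q_def dX assms(6) by (simp add: mult.assoc)
  qed
  have pcpos: "0 < Pc q k d r" if "d + r \<le> k" for d r using Pc_pos[OF hq that] .
  have deg: "card {Y \<in> YY. E X Y} = D" if X: "X \<in> XX" for X
    unfolding D_def degc[OF X, symmetric] using c0 by simp
  have cF: "card YY * c = Pc q k 0 (m * l)" using cfam[OF nl(2)] unfolding YY_def c_def by (simp add: mult.assoc)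
  have cS: "card ZZ * (fact (n + m) * Bl q l ^ (n + m)) = Pc q k 0 ((n + m) * l)"
    using cfam[OF nl(3)] unfolding ZZ_def by (simp add: mult.assoc)
  have Fpos: "0 < card YY"
  proof (rule ccontr)
    assume "\<not> 0 < card YY"
    hence "Pc q k 0 (m * l) = 0" using cF by simp
    thus False using pcpos[of 0 "m * l"] nl by simp
  qed
  have Spos: "0 < card ZZ"
  proof (rule ccontr)
    assume "\<not> 0 < card ZZ"
    hence "Pc q k 0 ((n + m) * l) = 0" using cS by simp
    thus False using pcpos[of 0 "(n + m) * l"] nl by simp
  qed
  have DF: "real D / real (card YY) = real q ^ (m * n * l\<^sup>2) * (\<Prod>i<m * l. qint q (k - n * l - i) / qint q (k - i))"
  proof -
    have "card XX * (fact n * Bl q l ^ n) = Pc q k 0 (n * l)"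
      using cfam[OF nl(1)] unfolding XX_def by (simp add: mult.assoc)
    hence "card XX \<noteq> 0" using pcpos[of 0 "n * l"] nl by (intro notI) simp
    then obtain X where X: "X \<in> XX" by (metis card.empty ex_in_conv)
    have Dc: "D * c = Pc q k (n * l) (m * l)" using deg[OF X] degc[OF X] by simp
    have "real D / real (card YY) = (real D * real c) / (real (card YY) * real c)"
      using c0 by simp
    also have "\<dots> = real (Pc q k (n * l) (m * l)) / real (Pc q k 0 (m * l))"
      unfolding of_nat_mult[symmetric] Dc cF ..
    finally show ?thesis using ratio_eq[OF hq assms(5)] by simp
  qed
  have edges: "card XX * D = card ZZ * ((n + m) choose n)"
  proof -
    have fin: "finite XX" by simp
    have "bip_edges XX YY E = Sigma XX (\<lambda>X. {Y \<in> YY. E X Y})" unfolding bip_edges_def by auto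
    hence "card (bip_edges XX YY E) = (\<Sum>X\<in>XX. card {Y \<in> YY. E X Y})" by (simp add: card_SigmaI)
    also have "\<dots> = card XX * D" using deg by simp
    finally have e1: "card (bip_edges XX YY E) = card XX * D" .
    have pt: "partition_on (bip_edges XX YY E) (Cm ` ZZ)" using cv unfolding induced_matching_cover_def by blast
    hence "bip_edges XX YY E = \<Union>(Cm ` ZZ)" by (simp add: partition_on_def)
    moreover have "card (\<Union>(Cm ` ZZ)) = sum card (Cm ` ZZ)"
      by (rule card_Union_disjoint) (use pt in \<open>auto simp: partition_on_def disjoint_def\<close>)
    moreover have "sum card (Cm ` ZZ) = (\<Sum>C\<in>Cm ` ZZ. (n + m) choose n)"
      by (rule sum.cong) (use cv in blast)+
    hence "sum card (Cm ` ZZ) = card (Cm ` ZZ) * ((n + m) choose n)" by simp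
    ultimately show ?thesis using e1 cv by simp
  qed
  have last: "real (card XX) * (1 - (1 - real D / real (card YY))) / (real (card ZZ) / real (card YY))
        = real ((n + m) choose n)"
  proof -
    have "real (card XX) * real D = real (card ZZ) * real ((n + m) choose n)"
      using arg_cong[OF edges, of real] by simp
    moreover have "real (card YY) \<noteq> 0" "real (card ZZ) \<noteq> 0" using Fpos Spos by (metis gr_implies_not0 of_nat_eq_0_iff)+
    ultimately show ?thesis by (simp add: field_simps del: of_nat_eq_0_iff)
  qed
  show ?thesis
  proof (intro exI conjI)
    show "bipartite_caching_graph XX YY E (card XX) (card YY) D"
      unfolding bipartite_caching_graph_def using deg by simp
    show "real (card XX) = cnt q k l n" by (rule K)
    show "real (card YY) = cnt q k l m" by (rule F)
    show "induced_matching_cover XX YY E (Cm ` ZZ)" using cv by blast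
    show "card (Cm ` ZZ) = card ZZ" using cv by blast
    show "\<forall>C\<in>Cm ` ZZ. card C = (n + m) choose n" using cv by blast
    show "real (card ZZ) = cnt q k l (n + m)" by (rule S)
    show "1 - real D / real (card YY) =
             1 - real q ^ (m * n * l\<^sup>2) * (\<Prod>i<m * l. qint q (k - n * l - i) / qint q (k - i))"
      using DF by simp
    show "real (card XX) * (1 - (1 - real D / real (card YY))) / (real (card ZZ) / real (card YY))
        = real ((n + m) choose n)" by (rule last)
  qed
qed

end
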